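(* Let $\mathcal C$ be a concept hierarchy, $r_1,r_2,\epsilon\in[0,1]$, $a>0$ a real with $r_1\le ar_2(1-\epsilon)$, $m$ a positive integer, and let $\mathcal L$ be the network defined below with fixed sets $F$ and $E$ satisfying the stated constraints. Then $\mathcal L$ $(r_1,r_2)$-recognizes $\mathcal C$: for every $B\subseteq C_0$ presented at time 0, (1) if $c\in supp_{r_2}(B)$ then at least $m(1-\epsilon)$ of the neurons $v\in reps(c)$ fire at time $level(c)$, and (2) if $c\notin supp_{r_1}(B)$ then no neuron $v\in reps(c)$ fires at time $level(c)$.
   Context: Concept hierarchies: fix positive integers $\ell_{max},n,k$. A universal set $D$ of concepts is partitioned into disjoint sets $D_0,\dots,D_{\ell_{max}}$ with $|D_0|=n$; $level(c)=\ell$ for $c\in D_\ell$. A concept hierarchy $\mathcal C$ consists of $C\subseteq D$, with $C_\ell=C\cap D_\ell$, and for each $c\in C_\ell$ with $1\le\ell\le\ell_{max}$ a set $children(c)\subseteq C_{\ell-1}$, such that $|C_{\ell_{max}}|=k$, $|children(c)|=k$ for all such $c$, and $children(c)\cap children(c')=\emptyset$ for distinct $c,c'\in C_\ell$. For $B\subseteq D_0$ and $r\in[0,1]$: $B(0)=B\cap C_0$; for $1\le\ell\le\ell_{max}$, $B(\ell)=\{c\in C_\ell:|children(c)\cap B(\ell-1)|\ge rk\}$; $supp_r(B)=\bigcup_{\ell}B(\ell)$. Network $\mathcal L$: neurons partitioned into layers $N_0,\dots,N_{\ell_{max}}$. Each $c\in D_0$ has a set $reps(c)$ of $m$ neurons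 in $N_0$, each $c\in C$ with $level(c)\ge1$ a set $reps(c)$ of $m$ neurons in $N_{level(c)}$, all pairwise disjoint. $E$ is a set of pairs $(u,v)$ with $v\in reps(c)$ and $u\in reps(c')$ for some child $c'$ of $c$; for $u\in N_{\ell-1}$, $v\in N_\ell$, $w(u,v)=1$ iff $(u,v)\in E$, else $0$. Threshold $\tau=ar_2km(1-\epsilon)$. A fixed set $F$ of neurons is failed (failed neurons never fire). Constraints: for every concept $c$, at least $m(1-\epsilon)$ neurons of $reps(c)$ are not in $F$; and for every $c$ with $level(c)\ge1$, every $v\in reps(c)$ and every child $c'$ of $c$, there are at least $am(1-\epsilon)$ neurons $u\in reps(c')\setminus F$ with $(u,v)\in E$. Input $B\subseteq C_0$ presented at time 0: a layer-0 neuron fires at time 0 iff it is in $\bigcup_{b\in B}reps(b)\setminus F$, and no layer-0 neuron fires at any other time. A non-failed $v\in N_\ell$, $\ell\ge1$, does not fire at time 0 and fires at time $t\ge1$ iff $\sum_{u\in N_{\ell-1}}w(u,v)x_u(t-1)\ge\tau$, where $x_u(s)\in\{0,1\}$ indicates whether $u$ fires at time $s$. *)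

theory Defs
  imports Complex_Main
begin

definition concept_hierarchy ::
  "nat \<Rightarrow> nat \<Rightarrow> nat \<Rightarrow> 'c set \<Rightarrow> ('c \<Rightarrow> nat) \<Rightarrow> 'c set \<Rightarrow> ('c \<Rightarrow> 'c set) \<Rightarrow> bool" where
  "concept_hierarchy lmax n k D level C children \<longleftrightarrow>
     lmax > 0 \<and> n > 0 \<and> k > 0 \<and>
     (\<forall>c\<in>D. level c \<le> lmax) \<and>
     finite {c\<in>D. level c = 0} \<and> card {c\<in>D. level c = 0} = n \<and>
     C \<subseteq> D \<and>
     finite {c\<in>C. level c = lmax} \<and> card {c\<in>C. level c = lmax} = k \<and>
     (\<forall>c\<in>C. 1 \<le> level c \<longrightarrow>
        children c \<subseteq> {c'\<in>C. level c' = level c - 1} \<and>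
        finite (children c) \<and> card (children c) = k) \<and>
     (\<forall>c\<in>C. \<forall>c'\<in>C. 1 \<le> level c \<and> level c' = level c \<and> c \<noteq> c' \<longrightarrow>
        children c \<inter> children c' = {})"

fun supp_level ::
  "real \<Rightarrow> nat \<Rightarrow> 'c set \<Rightarrow> ('c \<Rightarrow> nat) \<Rightarrow> ('c \<Rightarrow> 'c set) \<Rightarrow> 'c set \<Rightarrow> nat \<Rightarrow> 'c set" where
  "supp_level r k C level children B 0 = B \<inter> {c\<in>C. level c = 0}"
| "supp_level r k C level children B (Suc l) =
     {c\<in>C. level c = Suc l \<and>
        real (card (children c \<inter> supp_level r k C level children B l)) \<ge> r * real k}"

definition supp ::
  "nat \<Rightarrow> real \<Rightarrow> nat \<Rightarrow> 'c set \<Rightarrow> ('c \<Rightarrow> nat) \<Rightarrow> ('c \<Rightarrow> 'c set) \<Rightarrow> 'c set \<Rightarrow> 'c set" where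
  "supp lmax r k C level children B = (\<Union>l\<in>{0..lmax}. supp_level r k C level children B l)"

text \<open>The weighted sum
  \<open>\<Sum>u\<in>N_(l-1). w(u,v) x_u(t-1)\<close> with 0/1 weights is the number of
  layer-(l-1) neurons u with (u,v) \<in> E firing at time t-1.\<close>
fun fires ::
  "('n \<Rightarrow> nat) \<Rightarrow> ('c \<Rightarrow> 'n set) \<Rightarrow> ('n \<times> 'n) set \<Rightarrow> 'n set \<Rightarrow> real \<Rightarrow> 'c set
     \<Rightarrow> nat \<Rightarrow> 'n \<Rightarrow> bool" where
  "fires layer reps E F tau B 0 v =
     (layer v = 0 \<and> v \<notin> F \<and> v \<in> (\<Union>b\<in>B. reps b))"
| "fires layer reps E F tau B (Suc t) v =
     (layer v \<ge> 1 \<and> v \<notin> F \<and>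
      real (card {u. layer u = layer v - 1 \<and> (u, v) \<in> E \<and> fires layer reps E F tau B t u})
        \<ge> tau)"

end

theory Submission
  imports Defs
begin

theorem theorem8p5:
  fixes lmax n k m :: nat
    and D C :: "'c set" and level :: "'c \<Rightarrow> nat" and children :: "'c \<Rightarrow> 'c set"
    and layer :: "'n \<Rightarrow> nat" and reps :: "'c \<Rightarrow> 'n set"
    and E :: "('n \<times> 'n) set" and F :: "'n set"
    and r1 r2 \<epsilon> a :: real
  assumes hier: "concept_hierarchy lmax n k D level C children"
    and r1: "0 \<le> r1" "r1 \<le> 1" and r2: "0 \<le> r2" "r2 \<le> 1"
    and eps: "0 \<le> \<epsilon>" "\<epsilon> \<le> 1"
    and a: "a > 0" and r1_le: "r1 \<le> a * r2 * (1 - \<epsilon>)"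
    and m: "m > 0"
    and layers: "\<forall>u. layer u \<le> lmax"
    and reps0: "\<forall>c\<in>D. level c = 0 \<longrightarrow>
                   finite (reps c) \<and> card (reps c) = m \<and> (\<forall>u\<in>reps c. layer u = 0)"
    and reps1: "\<forall>c\<in>C. level c \<ge> 1 \<longrightarrow>
                   finite (reps c) \<and> card (reps c) = m \<and> (\<forall>u\<in>reps c. layer u = level c)"
    and reps_disj: "\<forall>c\<in>{c\<in>D. level c = 0} \<union> {c\<in>C. level c \<ge> 1}.
                    \<forall>c'\<in>{c\<in>D. level c = 0} \<union> {c\<in>C. level c \<ge> 1}.
                    c \<noteq> c' \<longrightarrow> reps c \<inter> reps c' = {}"
    and E_sub: "E \<subseteq> {(u, v). \<exists>c\<in>C. \<exists>c'. level c \<ge> 1 \<and> c' \<in> children c \<and>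
                                   v \<in> reps c \<and> u \<in> reps c'}"
    and F_reps: "\<forall>c\<in>{c\<in>D. level c = 0} \<union> {c\<in>C. level c \<ge> 1}.
                   real (card (reps c - F)) \<ge> real m * (1 - \<epsilon>)"
    and F_edges: "\<forall>c\<in>C. level c \<ge> 1 \<longrightarrow> (\<forall>v\<in>reps c. \<forall>c'\<in>children c.
                   real (card {u\<in>reps c' - F. (u, v) \<in> E}) \<ge> a * real m * (1 - \<epsilon>))"
  shows "\<forall>B. B \<subseteq> {c\<in>C. level c = 0} \<longrightarrow>
           (\<forall>c\<in>supp lmax r2 k C level children B.
              real (card {v\<in>reps c.
                 fires layer reps E F (a * r2 * real k * real m * (1 - \<epsilon>)) B (level c) v})
                \<ge> real m * (1 - \<epsilon>)) \<and>
           (\<forall>c\<in>{c\<in>D. level c = 0} \<union> {c\<in>C. level c \<ge> 1}.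
              c \<notin> supp lmax r1 k C level children B \<longrightarrow>
              (\<forall>v\<in>reps c.
                 \<not> fires layer reps E F (a * r2 * real k * real m * (1 - \<epsilon>)) B (level c) v))"
proof (intro allI impI)
  fix B assume B: "B \<subseteq> {c\<in>C. level c = 0}"
  define I where "I = {c\<in>D. level c = 0} \<union> {c\<in>C. level c \<ge> 1}"
  define \<tau> where "\<tau> = a * r2 * real k * real m * (1 - \<epsilon>)"
  define fr where "fr = fires layer reps E F \<tau> B"
  have CD: "C \<subseteq> D" and lvl: "\<forall>c\<in>D. level c \<le> lmax"
    and ch: "\<And>c. c \<in> C \<Longrightarrow> 1 \<le> level c \<Longrightarrow>
        children c \<subseteq> {c'\<in>C. level c' = level c - 1} \<and> finite (children c) \<and> card (children c) = k"
    and chd: "\<And>c c'. c \<in> C \<Longrightarrow> c' \<in> C \<Longrightarrow> 1 \<le> level c \<Longrightarrow> level c' = level c \<Longrightarrow> c \<noteq> c' \<Longrightarrow>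
        children c \<inter> children c' = {}"
    using hier unfolding concept_hierarchy_def by blast+
  have CI: "\<And>c. c \<in> C \<Longrightarrow> c \<in> I" using CD unfolding I_def by force
  have repsI: "\<And>c. c \<in> I \<Longrightarrow> finite (reps c) \<and> card (reps c) = m"
    using reps0 reps1 unfolding I_def by auto
  have disj: "\<And>c c' v. c \<in> I \<Longrightarrow> c' \<in> I \<Longrightarrow> v \<in> reps c \<Longrightarrow> v \<in> reps c' \<Longrightarrow> c = c'"
    using reps_disj unfolding I_def by blast
  have edge: "\<And>u v c. (u, v) \<in> E \<Longrightarrow> v \<in> reps c \<Longrightarrow> c \<in> C \<Longrightarrow> 1 \<le> level c \<Longrightarrow>
      \<exists>c'\<in>children c. u \<in> reps c'"
  proof -
    fix u v c assume "(u, v) \<in> E" "v \<in> reps c" "c \<in> C" "1 \<le> level c"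
    then obtain c0 c' where "c0 \<in> C" "level c0 \<ge> 1" "c' \<in> children c0" "v \<in> reps c0" "u \<in> reps c'"
      using E_sub by blast
    moreover have "c0 = c" using disj[of c0 c v] CI calculation \<open>c \<in> C\<close> \<open>v \<in> reps c\<close> by blast
    ultimately show "\<exists>c'\<in>children c. u \<in> reps c'" by blast
  qed
  have chI: "\<And>c c'. c \<in> C \<Longrightarrow> 1 \<le> level c \<Longrightarrow> c' \<in> children c \<Longrightarrow>
      c' \<in> C \<and> c' \<in> I \<and> level c' = level c - 1" using ch CI by blast
  have layer_reps: "\<And>c u. c \<in> I \<Longrightarrow> u \<in> reps c \<Longrightarrow> layer u = level c"
    using reps0 reps1 unfolding I_def by auto
  have fin_in: "\<And>c v. c \<in> C \<Longrightarrow> 1 \<le> level c \<Longrightarrow> v \<in> reps c \<Longrightarrow>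
      finite {u. (u, v) \<in> E}"
  proof -
    fix c v assume h: "c \<in> C" "1 \<le> level c" "v \<in> reps c"
    have "{u. (u, v) \<in> E} \<subseteq> (\<Union>c'\<in>children c. reps c')" using edge h by blast
    moreover have "finite (\<Union>c'\<in>children c. reps c')"
      using ch[OF h(1,2)] chI[OF h(1,2)] repsI by blast
    ultimately show "finite {u. (u, v) \<in> E}" by (rule finite_subset)
  qed
  have am: "0 \<le> a * real m * (1 - \<epsilon>)" using a eps by simp
  have P1: "\<And>c. c \<in> supp_level r2 k C level children B l \<Longrightarrow>
      c \<in> C \<and> level c = l \<and> (\<forall>v \<in> reps c - F. fr l v)" for l
  proof (induction l)
    case 0
    then show ?case using B CI layer_reps unfolding fr_def by fastforce
  next
    case (Suc l c)
    note c = Suc.prems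
    define S where "S = children c \<inter> supp_level r2 k C level children B l"
    have cC: "c \<in> C" "level c = Suc l" and cS: "r2 * real k \<le> real (card S)"
      using c unfolding S_def by auto
    have l1: "1 \<le> level c" using cC by simp
    have finS: "finite S" using ch[OF cC(1) l1] unfolding S_def by auto
    have "fr (Suc l) v" if v: "v \<in> reps c - F" for v
    proof -
      define U where "U = (\<Union>c'\<in>S. {u\<in>reps c' - F. (u, v) \<in> E})"
      define X where "X = {u. layer u = layer v - 1 \<and> (u, v) \<in> E \<and> fr l u}"
      have lv: "layer v = Suc l" using layer_reps[OF CI[OF cC(1)]] v cC by auto
      have SI: "\<And>c'. c' \<in> S \<Longrightarrow> c' \<in> C \<and> c' \<in> I \<and> level c' = l"
        using chI[OF cC(1) l1] cC unfolding S_def by auto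
      have "card U = (\<Sum>c'\<in>S. card {u\<in>reps c' - F. (u, v) \<in> E})"
        unfolding U_def
      proof (rule card_UN_disjoint[OF finS])
        show "\<forall>i\<in>S. finite {u \<in> reps i - F. (u, v) \<in> E}" using SI repsI by auto
        show "\<forall>i\<in>S. \<forall>j\<in>S. i \<noteq> j \<longrightarrow> {u \<in> reps i - F. (u, v) \<in> E} \<inter> {u \<in> reps j - F. (u, v) \<in> E} = {}"
          using SI disj by blast
      qed
      hence "real (card U) = (\<Sum>c'\<in>S. real (card {u\<in>reps c' - F. (u, v) \<in> E}))" by simp
      also have "\<dots> \<ge> real (card S) * (a * real m * (1 - \<epsilon>))"
        by (rule sum_bounded_below) (use F_edges cC l1 v S_def in auto)
      finally have U1: "real (card S) * (a * real m * (1 - \<epsilon>)) \<le> real (card U)" .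
      have "U \<subseteq> X"
      proof
        fix u assume "u \<in> U"
        then obtain c' where c': "c' \<in> S" "u \<in> reps c'" "u \<notin> F" "(u, v) \<in> E" unfolding U_def by blast
        have "fr l u" using Suc.IH[of c'] c' unfolding S_def by blast
        moreover have "layer u = l" using layer_reps SI c' by metis
        ultimately show "u \<in> X" unfolding X_def using lv c' by simp
      qed
      moreover have "finite X"
      proof -
        have "finite {u. (u, v) \<in> E}" using fin_in[OF cC(1) l1, of v] v by blast
        then show ?thesis unfolding X_def by (rule rev_finite_subset) auto
      qed
      ultimately have "card U \<le> card X" by (rule card_mono[rotated])
      moreover have "\<tau> \<le> real (card S) * (a * real m * (1 - \<epsilon>))"
      proof -
        have "\<tau> = (r2 * real k) * (a * real m * (1 - \<epsilon>))" unfolding \<tau>_def by simp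
        also have "\<dots> \<le> real (card S) * (a * real m * (1 - \<epsilon>))"
          by (rule mult_right_mono[OF cS am])
        finally show ?thesis .
      qed
      ultimately have "\<tau> \<le> real (card X)" using U1 by linarith
      moreover have "fr (Suc l) v = (layer v \<ge> 1 \<and> v \<notin> F \<and> \<tau> \<le> real (card X))"
        unfolding fr_def X_def by simp
      ultimately show ?thesis using lv v by simp
    qed
    then show ?case using cC by blast
  qed
  have P2: "\<And>c v. c \<in> I \<Longrightarrow> level c = l \<Longrightarrow> v \<in> reps c \<Longrightarrow> fr l v \<Longrightarrow>
      c \<in> supp_level r1 k C level children B l" for l
  proof (induction l)
    case (0 c v)
    then obtain b where "b \<in> B" "v \<in> reps b" unfolding fr_def by auto
    moreover have "b \<in> I" using B \<open>b \<in> B\<close> CI by blast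
    ultimately have "b = c" using disj 0 by blast
    then show ?case using \<open>b \<in> B\<close> B by auto
  next
    case (Suc l c v)
    have cC: "c \<in> C" using Suc.prems unfolding I_def by auto
    have l1: "1 \<le> level c" using Suc.prems by simp
    define S where "S = children c \<inter> supp_level r1 k C level children B l"
    define X where "X = {u. layer u = layer v - 1 \<and> (u, v) \<in> E \<and> fr l u}"
    have fr: "\<tau> \<le> real (card X)" using Suc.prems unfolding X_def fr_def by simp
    have finS: "finite S" using ch[OF cC l1] unfolding S_def by auto
    have "X \<subseteq> (\<Union>c'\<in>S. reps c')"
    proof
      fix u assume u: "u \<in> X"
      then obtain c' where c': "c' \<in> children c" "u \<in> reps c'"
        using edge[of u v c] cC l1 Suc.prems unfolding X_def by blast
      have "c' \<in> I" "level c' = l" using chI[OF cC l1 c'(1)] Suc.prems by auto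
      then have "c' \<in> S" using Suc.IH[of c' u] c' u unfolding S_def X_def by auto
      then show "u \<in> (\<Union>c'\<in>S. reps c')" using c' by blast
    qed
    moreover have "finite (\<Union>c'\<in>S. reps c')"
      using finS chI[OF cC l1] repsI unfolding S_def by auto
    ultimately have "card X \<le> card (\<Union>c'\<in>S. reps c')" by (rule card_mono[rotated])
    also have "\<dots> \<le> (\<Sum>c'\<in>S. card (reps c'))" by (rule card_UN_le[OF finS])
    also have "\<dots> = (\<Sum>c'\<in>S. m)"
      by (rule sum.cong) (use chI[OF cC l1] repsI S_def in auto)
    finally have "card X \<le> card S * m" by simp
    hence "real (card X) \<le> real (card S) * real m" by (metis of_nat_le_iff of_nat_mult)
    with fr have t: "\<tau> \<le> real (card S) * real m" by linarith
    have "r1 * real k * real m \<le> (a * r2 * (1 - \<epsilon>)) * real k * real m"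
      by (intro mult_right_mono r1_le) auto
    also have "\<dots> = \<tau>" unfolding \<tau>_def by simp
    finally have "r1 * real k * real m \<le> real (card S) * real m" using t by linarith
    hence "r1 * real k \<le> real (card S)" using m by simp
    then show ?case using cC Suc.prems unfolding S_def by simp
  qed
  have suppI: "\<And>c r. c \<in> supp lmax r k C level children B \<longleftrightarrow>
      (\<exists>l\<in>{0..lmax}. c \<in> supp_level r k C level children B l)" unfolding supp_def by blast
  show "(\<forall>c\<in>supp lmax r2 k C level children B.
          real (card {v\<in>reps c. fires layer reps E F (a * r2 * real k * real m * (1 - \<epsilon>)) B (level c) v})
            \<ge> real m * (1 - \<epsilon>)) \<and>
        (\<forall>c\<in>{c\<in>D. level c = 0} \<union> {c\<in>C. level c \<ge> 1}.
          c \<notin> supp lmax r1 k C level children B \<longrightarrow>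
          (\<forall>v\<in>reps c. \<not> fires layer reps E F (a * r2 * real k * real m * (1 - \<epsilon>)) B (level c) v))"
  proof (intro conjI ballI impI notI)
    fix c assume "c \<in> supp lmax r2 k C level children B"
    then obtain l where l: "c \<in> supp_level r2 k C level children B l" using suppI by blast
    note p = P1[OF l]
    have fin: "finite (reps c)" using repsI CI p by blast
    have "reps c - F \<subseteq> {v\<in>reps c. fr (level c) v}" using p by auto
    hence "card (reps c - F) \<le> card {v\<in>reps c. fr (level c) v}"
      by (intro card_mono) (use fin in auto)
    moreover have "real m * (1 - \<epsilon>) \<le> real (card (reps c - F))" using F_reps CI p unfolding I_def by blast
    ultimately show "real m * (1 - \<epsilon>) \<le> real (card {v\<in>reps c. fires layer reps E F (a * r2 * real k * real m * (1 - \<epsilon>)) B (level c) v})"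
      unfolding fr_def \<tau>_def by linarith
  next
    fix c v assume c: "c \<in> {c\<in>D. level c = 0} \<union> {c\<in>C. level c \<ge> 1}"
      and ns: "c \<notin> supp lmax r1 k C level children B" and v: "v \<in> reps c"
      and f: "fires layer reps E F (a * r2 * real k * real m * (1 - \<epsilon>)) B (level c) v"
    have cI: "c \<in> I" using c unfolding I_def .
    have "c \<in> supp_level r1 k C level children B (level c)"
      using P2[OF cI refl v] f unfolding fr_def \<tau>_def by blast
    moreover have "level c \<le> lmax" using c lvl CD by auto
    ultimately show False using ns suppI by auto
  qed
qed

end
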